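(* Let $\ell$ and $m$ be positive integers with $\ell\le m$, let $G$ be a group written additively, and let $\mathbf{a}=(a_1,\dots,a_m)$ be a sequence of elements of $G$. Then at least one of the following holds: (1) $|\Sigma^{\ell}(\mathbf{a})|\ge\min(p(G),\ m-\ell+1)$; (2) there exists $i\in[1,m]$ such that $\ell a_i\in\Sigma^{\ell}(\mathbf{a})$.
   Context: $p(G)$ is the order of the smallest nontrivial subgroup of $G$, or $\infty$ if no such subgroup exists. $\ell a_i$ denotes $a_i+\cdots+a_i$ ($\ell$ times). $\Sigma^{\ell}(\mathbf{a})$ is the set of all elements $a_{i_1}+\cdots+a_{i_\ell}$ with $i_1,\dots,i_\ell\in[1,m]$ pairwise distinct, taken in any order. *)

theory Defs
  imports Main "HOL-Library.Extended_Nat"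
begin

text \<open>Subgroups of an additively written (not necessarily abelian) group, given as a type
  of class group_add; the group G is the whole type.\<close>
definition add_subgroup :: "'a::group_add set \<Rightarrow> bool" where
  "add_subgroup H \<longleftrightarrow> 0 \<in> H \<and> (\<forall>x\<in>H. \<forall>y\<in>H. x + y \<in> H) \<and> (\<forall>x\<in>H. - x \<in> H)"

definition set_order :: "'a set \<Rightarrow> enat" where
  "set_order H = (if finite H then enat (card H) else \<infinity>)"

text \<open>p(G): order of the smallest nontrivial subgroup, or infinity if none exists
  (Inf of the empty set of enat is infinity).\<close>
definition p_grp :: "'a::group_add itself \<Rightarrow> enat" where
  "p_grp _ = Inf {set_order H | H::'a set. add_subgroup H \<and> H \<noteq> {0}}"

text \<open>\<Sigma>^l(a) for a = (a 1, ..., a m): sums a_{i1} + ... + a_{il} over pairwise distinct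
  indices in [1,m], taken in any order.\<close>
definition Sigma_l :: "nat \<Rightarrow> nat \<Rightarrow> (nat \<Rightarrow> 'a::group_add) \<Rightarrow> 'a set" where
  "Sigma_l l m a = {sum_list (map a is) | is. length is = l \<and> distinct is \<and> set is \<subseteq> {1..m}}"

end

theory Submission
  imports Defs
begin


definition ss :: "'a::group_add set \<Rightarrow> 'a set \<Rightarrow> 'a set" where
  "ss A B = {x + y | x y. x \<in> A \<and> y \<in> B}"

lemma ss_finite: "finite A \<Longrightarrow> finite B \<Longrightarrow> finite (ss A B)"
proof -
  assume "finite A" "finite B"
  have "ss A B = (\<lambda>(x,y). x + y) ` (A \<times> B)" unfolding ss_def by auto
  thus ?thesis using \<open>finite A\<close> \<open>finite B\<close> by simp
qed

lemma ss_mono: "A \<subseteq> A' \<Longrightarrow> B \<subseteq> B' \<Longrightarrow> ss A B \<subseteq> ss A' B'"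
  unfolding ss_def by blast

lemma card_le_ss1:
  assumes "finite A" "finite B" "b \<in> B" shows "card A \<le> card (ss A B)"
proof -
  have "(\<lambda>x. x + b) ` A \<subseteq> ss A B" using assms unfolding ss_def by blast
  moreover have "card ((\<lambda>x. x + b) ` A) = card A" by (rule card_image) (simp add: inj_on_def)
  ultimately show ?thesis using ss_finite[OF assms(1,2)] by (metis card_mono)
qed

lemma card_le_ss2:
  assumes "finite A" "finite B" "a \<in> A" shows "card B \<le> card (ss A B)"
proof -
  have "(\<lambda>y. a + y) ` B \<subseteq> ss A B" using assms unfolding ss_def by blast
  moreover have "card ((\<lambda>y. a + y) ` B) = card B" by (rule card_image) (simp add: inj_on_def)
  ultimately show ?thesis using ss_finite[OF assms(1,2)] by (metis card_mono)
qed

lemma p_le_subgroup: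
  fixes H :: "'a::group_add set"
  assumes "add_subgroup H" "H \<noteq> {0}"
  shows "p_grp TYPE('a) \<le> set_order H"
  unfolding p_grp_def by (rule Inf_lower) (use assms in blast)

lemma stab_bound:
  fixes g :: "'a::group_add"
  assumes fin: "finite B" and ne: "B \<noteq> {}" and g0: "g \<noteq> 0" and sub: "\<forall>y\<in>B. g + y \<in> B"
  shows "p_grp TYPE('a) \<le> enat (card B)"
proof -
  define H where "H = {h::'a. (\<lambda>y. h + y) ` B = B}"
  have tr: "(\<lambda>y. h + y) ` ((\<lambda>y. k + y) ` B) = (\<lambda>y. (h + k) + y) ` B" for h k :: 'a
    by (auto simp: image_image add.assoc)
  have gB: "(\<lambda>y. g + y) ` B = B"
  proof (rule card_subset_eq[OF fin])
    show "(\<lambda>y. g + y) ` B \<subseteq> B" using sub by auto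
    show "card ((\<lambda>y. g + y) ` B) = card B" by (rule card_image) (simp add: inj_on_def)
  qed
  have sg: "add_subgroup H"
    unfolding add_subgroup_def
  proof (intro conjI ballI)
    show "0 \<in> H" unfolding H_def by simp
  next
    fix x y assume "x \<in> H" "y \<in> H"
    thus "x + y \<in> H" unfolding H_def using tr[of x y] by simp
  next
    fix x assume "x \<in> H"
    hence "(\<lambda>y. - x + y) ` ((\<lambda>y. x + y) ` B) = (\<lambda>y. - x + y) ` B" unfolding H_def by simp
    thus "- x \<in> H" unfolding H_def using tr[of "-x" x] by simp
  qed
  have gH: "g \<in> H" unfolding H_def using gB by simp
  hence ne0: "H \<noteq> {0}" using g0 by auto
  obtain b0 where b0: "b0 \<in> B" using ne by auto
  have Hsub: "H \<subseteq> (\<lambda>z. z - b0) ` B"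
  proof
    fix h assume "h \<in> H"
    hence "h + b0 \<in> B" unfolding H_def using b0 by blast
    thus "h \<in> (\<lambda>z. z - b0) ` B" by (rule rev_image_eqI) simp
  qed
  have finH: "finite H" using Hsub fin finite_subset by blast
  have "card H \<le> card B" using card_mono[OF _ Hsub] fin card_image_le[OF fin, of "\<lambda>z. z - b0"] by simp
  hence "set_order H \<le> enat (card B)" unfolding set_order_def using finH by simp
  thus ?thesis using p_le_subgroup[OF sg ne0] by (rule order_trans[rotated])
qed



lemma ssI: "x \<in> A \<Longrightarrow> y \<in> B \<Longrightarrow> x + y \<in> ss A B"
  unfolding ss_def by blast

lemma ssE: "z \<in> ss A B \<Longrightarrow> (\<And>x y. z = x + y \<Longrightarrow> x \<in> A \<Longrightarrow> y \<in> B \<Longrightarrow> P) \<Longrightarrow> P"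
  unfolding ss_def by blast

lemma kemp_step:
  fixes A B :: "'a::group_add set"
  assumes fA: "finite A" and fB: "finite B" and nA: "A \<noteq> {}" and nB: "B \<noteq> {}"
  and IH: "\<And>A' B'. finite A' \<Longrightarrow> finite B' \<Longrightarrow> A' \<noteq> {} \<Longrightarrow> B' \<noteq> {} \<Longrightarrow>
      ss A' B' \<subseteq> ss A B \<Longrightarrow>
      (card (ss A' B') < card (ss A B) \<or>
       (card (ss A' B') = card (ss A B) \<and>
        (card A' + card B' > card A + card B \<or> (card A' + card B' = card A + card B \<and> card B' < card B)))) \<Longrightarrow>
      min (p_grp TYPE('a)) (enat (card A' + card B' - 1)) \<le> enat (card (ss A' B'))"
  shows "min (p_grp TYPE('a)) (enat (card A + card B - 1)) \<le> enat (card (ss A B))"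
proof -
  let ?p = "p_grp TYPE('a)"
  let ?S = "ss A B"
  have fS: "finite ?S" using ss_finite fA fB by blast
  have use_pair: "min ?p (enat (card A + card B - 1)) \<le> enat (card ?S)"
    if "finite A'" "finite B'" "A' \<noteq> {}" "B' \<noteq> {}" "ss A' B' \<subseteq> ?S"
       "card A' + card B' \<ge> card A + card B"
       "card (ss A' B') < card ?S \<or>
       (card (ss A' B') = card ?S \<and>
        (card A' + card B' > card A + card B \<or> (card A' + card B' = card A + card B \<and> card B' < card B)))"
     for A' B'
  proof -
    have "min ?p (enat (card A' + card B' - 1)) \<le> enat (card (ss A' B'))"
      using IH[OF that(1-5) that(7)] .
    moreover have "card (ss A' B') \<le> card ?S" using card_mono[OF fS that(5)] .
    ultimately have "min ?p (enat (card A' + card B' - 1)) \<le> enat (card ?S)"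
      using order_trans enat_ord_simps(1) by blast
    moreover have "min ?p (enat (card A + card B - 1)) \<le> min ?p (enat (card A' + card B' - 1))"
      using that(6) by (intro min.mono) auto
    ultimately show ?thesis by (rule order_trans[rotated])
  qed
  show ?thesis
  proof (cases "?p \<le> enat (card B)")
    case True
    obtain a where "a \<in> A" using nA by auto
    hence "card B \<le> card ?S" using card_le_ss2 fA fB by blast
    hence "enat (card B) \<le> enat (card ?S)" by simp
    hence "?p \<le> enat (card ?S)" using True by (rule order_trans[rotated])
    thus ?thesis by (simp add: min_le_iff_disj)
  next
    case pB: False
    show ?thesis
    proof (cases "\<forall>a\<in>A. \<forall>a'\<in>A. \<forall>b\<in>B. \<forall>b'\<in>B. a + b = a' + b' \<longrightarrow> a = a'")
      case True
      have inj: "inj_on (\<lambda>(x,y). x + y) (A \<times> B)"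
      proof (rule inj_onI)
        fix u v assume u: "u \<in> A \<times> B" and v: "v \<in> A \<times> B"
          and e: "(\<lambda>(x,y). x + y) u = (\<lambda>(x,y). x + y) v"
        obtain x y where xy: "u = (x,y)" by (cases u)
        obtain x' y' where xy': "v = (x',y')" by (cases v)
        have m: "x \<in> A" "y \<in> B" "x' \<in> A" "y' \<in> B" using u v xy xy' by auto
        have e2: "x + y = x' + y'" using e xy xy' by simp
        have "x = x'" using True[rule_format, OF m(1) m(3) m(2) m(4) e2] .
        moreover from this e2 have "y = y'" by simp
        ultimately show "u = v" using xy xy' by simp
      qed
      have sub: "(\<lambda>(x,y). x + y) ` (A \<times> B) \<subseteq> ?S" unfolding ss_def by fastforce
      have "card ((\<lambda>(x,y). x + y) ` (A \<times> B)) = card A * card B"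
        using card_image[OF inj] by (simp add: card_cartesian_product)
      hence cS: "card A * card B \<le> card ?S" using card_mono[OF fS sub] by simp
      obtain x where x: "card A = Suc x" using fA nA by (metis card_0_eq not0_implies_Suc)
      obtain y where y: "card B = Suc y" using fB nB by (metis card_0_eq not0_implies_Suc)
      have "card A + card B - 1 \<le> card A * card B" unfolding x y by simp
      hence "enat (card A + card B - 1) \<le> enat (card ?S)" using cS by simp
      thus ?thesis by (rule min.coboundedI2)
    next
      case False
      then obtain a a' b b' where ab: "a \<in> A" "a' \<in> A" "b \<in> B" "b' \<in> B" "a + b = a' + b'" "a \<noteq> a'"
        by auto
      define g where "g = - a + a'"
      have ag: "a + g = a'" unfolding g_def by (simp add: add.assoc[symmetric])
      have g0: "g \<noteq> 0" using ab(6) ag by auto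
      have "g + b' = - a + (a' + b')" unfolding g_def by (simp add: add.assoc)
      also have "\<dots> = - a + (a + b)" using ab(5) by simp
      also have "\<dots> = b" by (simp add: add.assoc[symmetric])
      finally have gb: "g + b' = b" .
      define A1 where "A1 = A \<union> (\<lambda>x. x + g) ` A"
      define B1 where "B1 = B \<inter> (\<lambda>y. - g + y) ` B"
      define A2 where "A2 = A \<inter> (\<lambda>x. x + g) ` A"
      define B2 where "B2 = B \<union> (\<lambda>y. - g + y) ` B"
      have imB: "y \<in> (\<lambda>y. - g + y) ` B \<longleftrightarrow> g + y \<in> B" for y
      proof
        assume "y \<in> (\<lambda>y. - g + y) ` B"
        then obtain z where "z \<in> B" "y = - g + z" by auto
        thus "g + y \<in> B" by (simp add: add.assoc[symmetric])
      next
        assume "g + y \<in> B"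
        moreover have "y = - g + (g + y)" by (simp add: add.assoc[symmetric])
        ultimately show "y \<in> (\<lambda>y. - g + y) ` B" by (rule rev_image_eqI)
      qed
      have B1c: "y \<in> B1 \<longleftrightarrow> y \<in> B \<and> g + y \<in> B" for y
        unfolding B1_def using imB by blast
      have fA1: "finite A1" "finite A2" "finite B1" "finite B2"
        using fA fB by (auto simp: A1_def A2_def B1_def B2_def)
      have nA1: "A1 \<noteq> {}" using nA A1_def by auto
      have nA2: "A2 \<noteq> {}" unfolding A2_def using ab(2) rev_image_eqI[of a A a' "\<lambda>x. x + g", OF ab(1) ag[symmetric]] by auto
      have nB1: "B1 \<noteq> {}" using B1c ab gb by auto
      have nB2: "B2 \<noteq> {}" using nB B2_def by auto
      have B1ne: "card B1 < card B"
      proof -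
        have "B1 \<subseteq> B" using B1c by auto
        moreover have "B1 \<noteq> B"
        proof
          assume "B1 = B"
          hence "\<forall>y\<in>B. g + y \<in> B" using B1c by blast
          hence "?p \<le> enat (card B)" using stab_bound[OF fB nB g0] by blast
          with pB show False by simp
        qed
        ultimately show ?thesis using fB by (simp add: psubset_card_mono)
      qed
      have s1: "ss A1 B1 \<subseteq> ?S"
      proof
        fix z assume "z \<in> ss A1 B1"
        then obtain x y where z: "z = x + y" "x \<in> A1" "y \<in> B1" by (rule ssE)
        show "z \<in> ?S"
        proof (cases "x \<in> A")
          case True thus ?thesis using z B1c by (auto intro!: ssI)
        next
          case False
          then obtain x0 where "x0 \<in> A" "x = x0 + g" using z(2) A1_def by auto
          hence "z = x0 + (g + y)" using z by (simp add: add.assoc)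
          thus ?thesis using \<open>x0 \<in> A\<close> z(3) B1c by (auto intro!: ssI)
        qed
      qed
      have s2: "ss A2 B2 \<subseteq> ?S"
      proof
        fix z assume "z \<in> ss A2 B2"
        then obtain x y where z: "z = x + y" "x \<in> A2" "y \<in> B2" by (rule ssE)
        obtain x0 where x0: "x0 \<in> A" "x = x0 + g" using z(2) A2_def by auto
        show "z \<in> ?S"
        proof (cases "y \<in> B")
          case True thus ?thesis using z A2_def by (auto intro!: ssI)
        next
          case False
          then obtain y0 where "y0 \<in> B" "y = - g + y0" using z(3) B2_def by auto
          hence "z = x0 + y0" using z x0 by (simp add: add.assoc)
          thus ?thesis using \<open>x0 \<in> A\<close> \<open>y0 \<in> B\<close> by (auto intro!: ssI)
        qed
      qed
      have cimA: "card ((\<lambda>x. x + g) ` A) = card A" by (rule card_image) (simp add: inj_on_def)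
      have cimB: "card ((\<lambda>y. - g + y) ` B) = card B" by (rule card_image) (simp add: inj_on_def)
      have cA: "card A1 + card A2 = 2 * card A"
        using card_Un_Int[OF fA finite_imageI[OF fA, of "\<lambda>x. x + g"]] cimA A1_def A2_def by simp
      have cB: "card B2 + card B1 = 2 * card B"
        using card_Un_Int[OF fB finite_imageI[OF fB, of "\<lambda>y. - g + y"]] cimB B1_def B2_def by simp
      have c1: "card (ss A1 B1) \<le> card ?S" using card_mono[OF fS s1] .
      have c2: "card (ss A2 B2) \<le> card ?S" using card_mono[OF fS s2] .
      show ?thesis
      proof (cases "card A1 + card B1 \<ge> card A + card B")
        case True
        show ?thesis
          using c1 True B1ne by (intro use_pair[OF fA1(1) fA1(3) nA1 nB1 s1 True]; linarith)
      next
        case False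
        hence T: "card A2 + card B2 > card A + card B" using cA cB by linarith
        show ?thesis
          using c2 T by (intro use_pair[OF fA1(2) fA1(4) nA2 nB2 s2]; linarith)
      qed
    qed
  qed
qed


lemma kemp:
  fixes A B :: "'a::group_add set"
  assumes "finite A" "finite B" "A \<noteq> {}" "B \<noteq> {}"
  shows "min (p_grp TYPE('a)) (enat (card A + card B - 1)) \<le> enat (card (ss A B))"
proof -
  define f :: "('a set \<times> 'a set \<Rightarrow> nat) list" where
    "f = [\<lambda>(A,B). card (ss A B), \<lambda>(A,B). 2 * card (ss A B) - (card A + card B), \<lambda>(A,B). card B]"
  have "\<forall>A B. x = (A,B) \<longrightarrow> finite A \<longrightarrow> finite B \<longrightarrow> A \<noteq> {} \<longrightarrow> B \<noteq> {} \<longrightarrow>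
          min (p_grp TYPE('a)) (enat (card A + card B - 1)) \<le> enat (card (ss A B))" for x :: "'a set \<times> 'a set"
  proof (induction x rule: wf_induct_rule[OF wf_measures[of f]])
    case (1 x)
    show ?case
    proof (intro allI impI)
      fix A B assume x: "x = (A,B)" and h: "finite A" "finite B" "A \<noteq> {}" "B \<noteq> {}"
      show "min (p_grp TYPE('a)) (enat (card A + card B - 1)) \<le> enat (card (ss A B))"
      proof (rule kemp_step[OF h])
        fix A' B' :: "'a set"
        assume h': "finite A'" "finite B'" "A' \<noteq> {}" "B' \<noteq> {}" and sub: "ss A' B' \<subseteq> ss A B"
          and dec: "card (ss A' B') < card (ss A B) \<or>
       (card (ss A' B') = card (ss A B) \<and>
        (card A' + card B' > card A + card B \<or> (card A' + card B' = card A + card B \<and> card B' < card B)))"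
        obtain a' b' where "a' \<in> A'" "b' \<in> B'" using h' by auto
        hence l1: "card A' + card B' \<le> 2 * card (ss A' B')"
          using card_le_ss1[OF h'(1,2), of b'] card_le_ss2[OF h'(1,2), of a'] by simp
        obtain a b where "a \<in> A" "b \<in> B" using h by auto
        hence l2: "card A + card B \<le> 2 * card (ss A B)"
          using card_le_ss1[OF h(1,2), of b] card_le_ss2[OF h(1,2), of a] by simp
        have "((A',B'), x) \<in> measures f"
          unfolding x f_def using dec l1 l2 by auto
        thus "min (p_grp TYPE('a)) (enat (card A' + card B' - 1)) \<le> enat (card (ss A' B'))"
          using 1[rule_format, OF _ refl] h' by blast
      qed
    qed
  qed
  thus ?thesis using assms by blast
qed



definition Sg :: "nat \<Rightarrow> nat set \<Rightarrow> (nat \<Rightarrow> 'a::group_add) \<Rightarrow> 'a set" where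
  "Sg l K a = {sum_list (map a is) | is. length is = l \<and> distinct is \<and> set is \<subseteq> K}"

lemma SgI: "length is = l \<Longrightarrow> distinct is \<Longrightarrow> set is \<subseteq> K \<Longrightarrow> sum_list (map a is) \<in> Sg l K a"
  unfolding Sg_def by blast

lemma SgE: "z \<in> Sg l K a \<Longrightarrow> (\<And>is. z = sum_list (map a is) \<Longrightarrow> length is = l \<Longrightarrow> distinct is \<Longrightarrow> set is \<subseteq> K \<Longrightarrow> P) \<Longrightarrow> P"
  unfolding Sg_def by blast

lemma Sg_finite: "finite K \<Longrightarrow> finite (Sg l K a)"
proof -
  assume fK: "finite K"
  have "Sg l K a \<subseteq> (\<lambda>is. sum_list (map a is)) ` {is. set is \<subseteq> K \<and> length is = l}"
  proof
    fix z assume "z \<in> Sg l K a"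
    then obtain "is" where "z = sum_list (map a is)" "length is = l" "set is \<subseteq> K" by (rule SgE)
    thus "z \<in> (\<lambda>is. sum_list (map a is)) ` {is. set is \<subseteq> K \<and> length is = l}"
      by (intro image_eqI[of _ _ "is"]) auto
  qed
  thus ?thesis by (rule finite_subset[OF _ finite_imageI[OF finite_lists_length_eq[OF fK]]])
qed

lemma Sg_ne: assumes "finite K" "l \<le> card K" shows "Sg l K a \<noteq> {}"
proof -
  obtain T where T: "T \<subseteq> K" "card T = l" "finite T" by (rule obtain_subset_with_card_n[OF assms(2)])
  obtain r where r: "set r = T" "distinct r" using finite_distinct_list[OF T(3)] by blast
  have "length r = l" using distinct_card[OF r(2)] r(1) T(2) by simp
  hence "sum_list (map a r) \<in> Sg l K a" by (rule SgI) (use r T in auto)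
  thus ?thesis by blast
qed

lemma sum_rep: "sum_list (replicate (Suc n) x) = sum_list (replicate n x) + (x::'a::monoid_add)"
proof -
  have "replicate (Suc n) x = replicate n x @ [x]" by (simp add: replicate_append_same)
  thus ?thesis by simp
qed

lemma arith_comb:
  fixes p :: enat
  assumes "min p (enat c) \<le> enat s" "min p (enat (s + d - 1)) \<le> enat X" "d \<ge> 1" "t \<le> c + d - 1"
  shows "min p (enat t) \<le> enat X"
proof (cases p)
  case (enat q) thus ?thesis using assms by (auto simp: min_def split: if_splits)
next
  case infinity thus ?thesis using assms by simp
qed

lemma main:
  fixes a :: "nat \<Rightarrow> 'a::group_add"
  shows "finite K \<Longrightarrow> Suc n \<le> card K \<Longrightarrow>
    min (p_grp TYPE('a)) (enat (card K - Suc n + 1)) \<le> enat (card (Sg (Suc n) K a))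
    \<or> (\<exists>i\<in>K. sum_list (replicate (Suc n) (a i)) \<in> Sg (Suc n) K a)"
proof (induction n arbitrary: K)
  case 0
  then obtain i where "i \<in> K" by fastforce
  hence "sum_list (map a [i]) \<in> Sg (Suc 0) K a" by (intro SgI) auto
  thus ?case using \<open>i \<in> K\<close> by auto
next
  case (Suc n)
  note fK = Suc.prems(1)
  let ?p = "p_grp TYPE('a)"
  let ?L = "Suc (Suc n)"
  define T0 where "T0 = inv_into K a ` (a ` K)"
  have T0K: "T0 \<subseteq> K" unfolding T0_def by (rule image_subsetI) (rule inv_into_into)
  have "a ` T0 = (\<lambda>y. a (inv_into K a y)) ` (a ` K)" unfolding T0_def by (simp add: image_image)
  also have "\<dots> = (\<lambda>y. y) ` (a ` K)" by (rule image_cong) (simp_all add: f_inv_into_f)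
  finally have aT0: "a ` T0 = a ` K" by simp
  have injT0: "inj_on a T0"
  proof (rule inj_onI)
    fix x y assume x: "x \<in> T0" and y: "y \<in> T0" and e: "a x = a y"
    from x obtain u where u: "u \<in> a ` K" "x = inv_into K a u" unfolding T0_def by (rule imageE) 
    from y obtain v where v: "v \<in> a ` K" "y = inv_into K a v" unfolding T0_def by (rule imageE)
    have "u = v" using e u v f_inv_into_f[of u a K] f_inv_into_f[of v a K] by simp
    thus "x = y" using u v by simp
  qed
  have cT0: "card T0 = card (a ` K)" using card_image[OF injT0] aT0 by simp
  have fT0: "finite T0" by (rule finite_subset[OF T0K fK])
  show ?case
  proof (cases "card (a ` K) \<ge> card K - Suc n")
    case True
    then obtain T where T: "T \<subseteq> T0" "card T = card K - Suc n" "finite T"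
      using obtain_subset_with_card_n[of "card K - Suc n" T0] cT0 by metis
    have TK: "T \<subseteq> K" using T T0K by blast
    have injT: "inj_on a T" by (rule inj_on_subset[OF injT0 T(1)])
    have cR: "card (K - T) = Suc n" using card_Diff_subset[OF T(3) TK] T(2) Suc.prems(2) by simp
    obtain r where r: "set r = K - T" "distinct r" using finite_distinct_list[of "K - T"] fK by blast
    have lr: "length r = Suc n" using distinct_card[OF r(2)] r(1) cR by simp
    define f where "f = (\<lambda>t. sum_list (map a r) + a t)"
    have fsub: "f ` T \<subseteq> Sg ?L K a"
    proof
      fix z assume "z \<in> f ` T"
      then obtain t where t: "t \<in> T" "z = f t" by blast
      have "sum_list (map a (r @ [t])) \<in> Sg ?L K a"
        by (rule SgI) (use lr r t TK in auto)
      thus "z \<in> Sg ?L K a" using t f_def by simp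
    qed
    have "inj_on f T" unfolding f_def using injT by (auto simp: inj_on_def)
    hence "card T \<le> card (Sg ?L K a)"
      using card_mono[OF Sg_finite[OF fK] fsub] card_image by metis
    hence "enat (card K - ?L + 1) \<le> enat (card (Sg ?L K a))" using T(2) Suc.prems(2) by simp
    thus ?thesis by (intro disjI1 min.coboundedI2)
  next
    case False
    define K' where "K' = K - T0"
    have fK': "finite K'" using fK K'_def by simp
    have cK': "card K' = card K - card (a ` K)" unfolding K'_def using card_Diff_subset[OF fT0 T0K] cT0 by simp
    have cK'2: "Suc n \<le> card K'" using cK' False by simp
    have disj: "t \<in> T0 \<Longrightarrow> t \<notin> K'" for t unfolding K'_def by simp
    have K'K: "K' \<subseteq> K" unfolding K'_def by blast
    from Suc.IH[OF fK' cK'2] show ?thesis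
    proof
      assume IH1: "min ?p (enat (card K' - Suc n + 1)) \<le> enat (card (Sg (Suc n) K' a))"
      let ?A = "Sg (Suc n) K' a" and ?B = "a ` T0"
      have fA: "finite ?A" by (rule Sg_finite[OF fK'])
      have nA: "?A \<noteq> {}" by (rule Sg_ne[OF fK' cK'2])
      have nK: "K \<noteq> {}" using Suc.prems(2) by auto
      have nB: "?B \<noteq> {}" using aT0 nK by auto
      have fB: "finite ?B" using fT0 by simp
      have cB: "card ?B = card (a ` K)" using aT0 by simp
      have dpos: "card (a ` K) \<ge> 1" using nK fK by (simp add: Suc_le_eq card_gt_0_iff)
      have sub: "ss ?A ?B \<subseteq> Sg ?L K a"
      proof
        fix z assume "z \<in> ss ?A ?B"
        then obtain y v where z: "z = y + v" "y \<in> ?A" "v \<in> ?B" by (rule ssE)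
        from z(2) obtain "is" where hs: "y = sum_list (map a is)" "length is = Suc n" "distinct is" "set is \<subseteq> K'"
          by (rule SgE)
        from z(3) obtain t where t: "t \<in> T0" "v = a t" by blast
        have "sum_list (map a (is @ [t])) \<in> Sg ?L K a"
          by (rule SgI) (use hs t disj K'K T0K in auto)
        thus "z \<in> Sg ?L K a" using z hs t by simp
      qed
      have K2: "min ?p (enat (card ?A + card ?B - 1)) \<le> enat (card (ss ?A ?B))"
        by (rule kemp[OF fA fB nA nB])
      have "card (ss ?A ?B) \<le> card (Sg ?L K a)" by (rule card_mono[OF Sg_finite[OF fK] sub])
      hence K3: "min ?p (enat (card ?A + card (a ` K) - 1)) \<le> enat (card (Sg ?L K a))"
        using order_trans[OF K2[unfolded cB]] \<open>card (ss ?A ?B) \<le> card (Sg ?L K a)\<close> by simp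
      have "min ?p (enat (card K - ?L + 1)) \<le> enat (card (Sg ?L K a))"
        by (rule arith_comb[OF IH1 K3 dpos]) (use cK' False Suc.prems(2) in simp)
      thus ?thesis by blast
    next
      assume "\<exists>i\<in>K'. sum_list (replicate (Suc n) (a i)) \<in> Sg (Suc n) K' a"
      then obtain i where i: "i \<in> K'" "sum_list (replicate (Suc n) (a i)) \<in> Sg (Suc n) K' a" by blast
      from i(2) obtain "is" where hs: "sum_list (replicate (Suc n) (a i)) = sum_list (map a is)"
          "length is = Suc n" "distinct is" "set is \<subseteq> K'"
        by (rule SgE)
      have "a i \<in> a ` T0" using aT0 i(1) K'K by auto
      then obtain t where t: "t \<in> T0" "a t = a i" by auto
      have "sum_list (map a (is @ [t])) \<in> Sg ?L K a"
        by (rule SgI) (use hs t disj K'K T0K in auto)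
      moreover have "sum_list (map a (is @ [t])) = sum_list (replicate ?L (a i))"
        using hs(1) t(2) sum_rep[of "Suc n" "a i"] by simp
      ultimately show ?thesis using i(1) K'K by auto
    qed
  qed
qed


theorem theorem6p5:
  fixes l m :: nat and a :: "nat \<Rightarrow> 'a::group_add"
  assumes "1 \<le> l" and "l \<le> m"
  shows "enat (card (Sigma_l l m a)) \<ge> min (p_grp TYPE('a)) (enat (m - l + 1))
         \<or> (\<exists>i\<in>{1..m}. sum_list (replicate l (a i)) \<in> Sigma_l l m a)"
proof -
  have eq: "Sigma_l l m a = Sg l {1..m} a" unfolding Sigma_l_def Sg_def by simp
  obtain n where n: "l = Suc n" using assms(1) by (cases l) auto
  have "Suc n \<le> card {1..m}" using assms(2) n by simp
  from main[OF finite_atLeastAtMost this, of a] show ?thesis by (simp add: eq[unfolded n] n)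
qed

end
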